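(* Let $S=(X,\cdot)$ be a semigroup and $\Phi$ a tight twisting of $S$, and let $T_\Phi^0$ be the associated $0$-twisted semigroup. Then for all $a,b\in X$ and all $\xi\in\{\mathcal{R},\mathcal{L},\mathcal{D},\mathcal{J},\mathcal{H},\leq_{\mathcal{R}},\leq_{\mathcal{L}},\leq_{\mathcal{J}}\}$ we have $a\mathrel{\xi^{T_\Phi^0}}b \iff a\mathrel{\xi^{S}}b$.
   Context: Green's relations and the preorders $\leq_{\mathcal{R}},\leq_{\mathcal{L}},\leq_{\mathcal{J}}$ are the standard ones (defined using the semigroup with an identity adjoined); a superscript indicates the semigroup in which they are computed. $\mathbb{N}=\{0,1,2,\dots\}$. A twisting of a semigroup $S$ is a map $\Phi:S\times S\to\mathbb{N}$ with $\Phi(a,b)+\Phi(ab,c)=\Phi(a,bc)+\Phi(b,c)$ for all $a,b,c\in S$. It is tight if (1) for all $a,b\in S$ there is $a'\in S$ with $ab=a'b$ and $\Phi(a',b)=0$, and (2) for all $a,b\in S$ there is $b'\in S$ with $ab=ab'$ and $\Phi(a,b')=0$. For $S=(X,\cdot)$ with twisting $\Phi$, the $0$-twisted semigroup is $T_\Phi^0=(X\sqcup\{0\},* )$ where $a*b=ab$ if $a,b\neq0$ and $\Phi(a,b)=0$, and $a*b=0$ otherwise. *)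

theory Defs
  imports Main
begin

text \<open>Green's preorders are computed in S^1 (identity adjoined), i.e. reflexively.\<close>

definition leR :: "('b \<Rightarrow> 'b \<Rightarrow> 'b) \<Rightarrow> 'b \<Rightarrow> 'b \<Rightarrow> bool" where
  "leR m a b \<longleftrightarrow> a = b \<or> (\<exists>x. a = m b x)"

definition leL :: "('b \<Rightarrow> 'b \<Rightarrow> 'b) \<Rightarrow> 'b \<Rightarrow> 'b \<Rightarrow> bool" where
  "leL m a b \<longleftrightarrow> a = b \<or> (\<exists>x. a = m x b)"

definition leJ :: "('b \<Rightarrow> 'b \<Rightarrow> 'b) \<Rightarrow> 'b \<Rightarrow> 'b \<Rightarrow> bool" where
  "leJ m a b \<longleftrightarrow> a = b \<or> (\<exists>x. a = m x b) \<or> (\<exists>y. a = m b y) \<or> (\<exists>x y. a = m (m x b) y)"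

definition greenR :: "('b \<Rightarrow> 'b \<Rightarrow> 'b) \<Rightarrow> 'b \<Rightarrow> 'b \<Rightarrow> bool" where
  "greenR m a b \<longleftrightarrow> leR m a b \<and> leR m b a"

definition greenL :: "('b \<Rightarrow> 'b \<Rightarrow> 'b) \<Rightarrow> 'b \<Rightarrow> 'b \<Rightarrow> bool" where
  "greenL m a b \<longleftrightarrow> leL m a b \<and> leL m b a"

definition greenJ :: "('b \<Rightarrow> 'b \<Rightarrow> 'b) \<Rightarrow> 'b \<Rightarrow> 'b \<Rightarrow> bool" where
  "greenJ m a b \<longleftrightarrow> leJ m a b \<and> leJ m b a"

definition greenH :: "('b \<Rightarrow> 'b \<Rightarrow> 'b) \<Rightarrow> 'b \<Rightarrow> 'b \<Rightarrow> bool" where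
  "greenH m a b \<longleftrightarrow> greenR m a b \<and> greenL m a b"

definition greenD :: "('b \<Rightarrow> 'b \<Rightarrow> 'b) \<Rightarrow> 'b \<Rightarrow> 'b \<Rightarrow> bool" where
  "greenD m a b \<longleftrightarrow> (\<exists>c. greenR m a c \<and> greenL m c b)"

datatype green_kind = gR | gL | gD | gJ | gH | gleR | gleL | gleJ

fun green :: "green_kind \<Rightarrow> ('b \<Rightarrow> 'b \<Rightarrow> 'b) \<Rightarrow> 'b \<Rightarrow> 'b \<Rightarrow> bool" where
  "green gR m = greenR m"
| "green gL m = greenL m"
| "green gD m = greenD m"
| "green gJ m = greenJ m"
| "green gH m = greenH m"
| "green gleR m = leR m"
| "green gleL m = leL m"
| "green gleJ m = leJ m"

definition twisting :: "('a \<Rightarrow> 'a \<Rightarrow> 'a) \<Rightarrow> ('a \<Rightarrow> 'a \<Rightarrow> nat) \<Rightarrow> bool" where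
  "twisting m \<Phi> \<longleftrightarrow> (\<forall>a b c. \<Phi> a b + \<Phi> (m a b) c = \<Phi> a (m b c) + \<Phi> b c)"

definition tight :: "('a \<Rightarrow> 'a \<Rightarrow> 'a) \<Rightarrow> ('a \<Rightarrow> 'a \<Rightarrow> nat) \<Rightarrow> bool" where
  "tight m \<Phi> \<longleftrightarrow>
     (\<forall>a b. \<exists>a'. m a b = m a' b \<and> \<Phi> a' b = 0) \<and>
     (\<forall>a b. \<exists>b'. m a b = m a b' \<and> \<Phi> a b' = 0)"

text \<open>The 0-twisted semigroup on X \<union> {0}: None plays the role of 0.\<close>
fun tw0 :: "('a \<Rightarrow> 'a \<Rightarrow> 'a) \<Rightarrow> ('a \<Rightarrow> 'a \<Rightarrow> nat) \<Rightarrow> 'a option \<Rightarrow> 'a option \<Rightarrow> 'a option" where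
  "tw0 m \<Phi> (Some a) (Some b) = (if \<Phi> a b = 0 then Some (m a b) else None)"
| "tw0 m \<Phi> _ _ = None"

end

theory Submission
  imports Defs
begin

lemma tw0_Some: "tw0 m \<Phi> x y = Some c \<longleftrightarrow> (\<exists>a b. x = Some a \<and> y = Some b \<and> \<Phi> a b = 0 \<and> c = m a b)"
  by (cases x; cases y) auto

lemma leR_eq:
  assumes "tight m \<Phi>"
  shows "leR (tw0 m \<Phi>) (Some a) (Some b) \<longleftrightarrow> leR m a b"
proof
  assume "leR (tw0 m \<Phi>) (Some a) (Some b)"
  then show "leR m a b" unfolding leR_def by (metis option.inject tw0_Some)
next
  assume "leR m a b"
  then consider "a = b" | x where "a = m b x" unfolding leR_def by blast
  then show "leR (tw0 m \<Phi>) (Some a) (Some b)"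
  proof cases
    case 1 then show ?thesis by (simp add: leR_def)
  next
    case (2 x)
    then obtain x' where "m b x = m b x'" "\<Phi> b x' = 0" using assms unfolding tight_def by metis
    then have "Some a = tw0 m \<Phi> (Some b) (Some x')" using 2 by simp
    then show ?thesis unfolding leR_def by blast
  qed
qed

lemma leL_eq:
  assumes "tight m \<Phi>"
  shows "leL (tw0 m \<Phi>) (Some a) (Some b) \<longleftrightarrow> leL m a b"
proof
  assume "leL (tw0 m \<Phi>) (Some a) (Some b)"
  then show "leL m a b" unfolding leL_def by (metis option.inject tw0_Some)
next
  assume "leL m a b"
  then consider "a = b" | x where "a = m x b" unfolding leL_def by blast
  then show "leL (tw0 m \<Phi>) (Some a) (Some b)"
  proof cases
    case 1 then show ?thesis by (simp add: leL_def)
  next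
    case (2 x)
    then obtain x' where "m x b = m x' b" "\<Phi> x' b = 0" using assms unfolding tight_def by metis
    then have "Some a = tw0 m \<Phi> (Some x') (Some b)" using 2 by simp
    then show ?thesis unfolding leL_def by blast
  qed
qed

lemma leJ_eq:
  assumes sg: "semigroup m" and tw: "twisting m \<Phi>" and ti: "tight m \<Phi>"
  shows "leJ (tw0 m \<Phi>) (Some a) (Some b) \<longleftrightarrow> leJ m a b"
proof
  assume "leJ (tw0 m \<Phi>) (Some a) (Some b)"
  then show "leJ m a b" unfolding leJ_def by (metis option.inject tw0_Some)
next
  have as: "\<And>x y z. m (m x y) z = m x (m y z)" using sg by (simp add: semigroup.assoc)
  assume "leJ m a b"
  then consider "a = b" | x where "a = m x b" | y where "a = m b y" | x y where "a = m (m x b) y"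
    unfolding leJ_def by blast
  then show "leJ (tw0 m \<Phi>) (Some a) (Some b)"
  proof cases
    case 1 then show ?thesis by (simp add: leJ_def)
  next
    case (2 x)
    then have "leL m a b" unfolding leL_def by blast
    then have "leL (tw0 m \<Phi>) (Some a) (Some b)" using leL_eq[OF ti] by blast
    then show ?thesis unfolding leL_def leJ_def by blast
  next
    case (3 y)
    then have "leR m a b" unfolding leR_def by blast
    then have "leR (tw0 m \<Phi>) (Some a) (Some b)" using leR_eq[OF ti] by blast
    then show ?thesis unfolding leR_def leJ_def by blast
  next
    case (4 x y)
    obtain y' where y': "m b y = m b y'" "\<Phi> b y' = 0" using ti unfolding tight_def by metis
    obtain x' where x': "m x (m b y') = m x' (m b y')" "\<Phi> x' (m b y') = 0" using ti unfolding tight_def by metis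
    have c: "\<Phi> x' b + \<Phi> (m x' b) y' = \<Phi> x' (m b y') + \<Phi> b y'" using tw unfolding twisting_def by blast
    then have z1: "\<Phi> x' b = 0" and z2: "\<Phi> (m x' b) y' = 0" using x' y' by auto
    have "a = m (m x' b) y'" using 4 x' y' as by metis
    then have "Some a = tw0 m \<Phi> (tw0 m \<Phi> (Some x') (Some b)) (Some y')" using z1 z2 by simp
    then show ?thesis unfolding leJ_def by blast
  qed
qed

lemma notR_None: "\<not> leR (tw0 m \<Phi>) (Some a) None"
  unfolding leR_def by (metis option.distinct(1) tw0_Some)

theorem mainTheorem2:
  fixes m :: "'a \<Rightarrow> 'a \<Rightarrow> 'a" and \<Phi> :: "'a \<Rightarrow> 'a \<Rightarrow> nat"
  assumes "semigroup m"
    and "twisting m \<Phi>"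
    and "tight m \<Phi>"
  shows "\<forall>a b. \<forall>\<xi>. green \<xi> (tw0 m \<Phi>) (Some a) (Some b) \<longleftrightarrow> green \<xi> m a b"
proof (intro allI)
  fix a b \<xi>
  note R = leR_eq[OF assms(3)] and L = leL_eq[OF assms(3)] and J = leJ_eq[OF assms]
  have D: "greenD (tw0 m \<Phi>) (Some a) (Some b) \<longleftrightarrow> greenD m a b"
  proof
    assume "greenD (tw0 m \<Phi>) (Some a) (Some b)"
    then obtain c where c: "greenR (tw0 m \<Phi>) (Some a) c" "greenL (tw0 m \<Phi>) c (Some b)"
      unfolding greenD_def by blast
    then obtain c' where "c = Some c'" using notR_None[of m \<Phi> a] unfolding greenR_def by (cases c) auto
    then show "greenD m a b" using c R L unfolding greenD_def greenR_def greenL_def by blast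
  next
    assume "greenD m a b"
    then obtain c where c: "greenR m a c" "greenL m c b" unfolding greenD_def by blast
    then show "greenD (tw0 m \<Phi>) (Some a) (Some b)"
      using R L unfolding greenD_def greenR_def greenL_def by blast
  qed
  show "green \<xi> (tw0 m \<Phi>) (Some a) (Some b) \<longleftrightarrow> green \<xi> m a b"
    by (cases \<xi>) (simp_all add: R L J D greenR_def greenL_def greenJ_def greenH_def)
qed

end
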